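(* For the 1-nearest-neighbor (1-NN) learning algorithm, there exist noisy-label data distributions (i.e. two group distributions $D_A,D_B$ over $\mathcal{X}\times\{-1,1\}$, with $\mathcal{X}$ a metric space, under which labels are subject to random flipping) and a training-set size $n$ such that the induced evolutionary prediction game has a stable coexistence equilibrium, i.e. a stable Nash equilibrium $\mathbf{p}^*$ with $p^*_A>0$ and $p^*_B>0$.
   Context: 1-NN: given a training set $S=\{(x_i,y_i)\}_{i=1}^n$, predicts for $x$ the label of its nearest training point. The learning algorithm samples $S\sim D_{\mathbf{p}}^n$ i.i.d. from the mixture $D_{\mathbf{p}}=p_AD_A+p_BD_B$ ($\mathbf{p}\in\Delta^2$) and outputs the 1-NN classifier $h_S$. The evolutionary prediction game is $F_k(\mathbf{p})=\mathbb{E}_{S}[\Pr_{(x,y)\sim D_k}[h_S(x)=y]]$. Nash equilibrium: $\mathrm{supp}(\mathbf{p}^* )\subseteq\arg\max_kF_k(\mathbf{p}^* )$. Stability refers to population dynamics $\dot{\mathbf{p}}=V_F(\mathbf{p})$ with $V_F$ continuous, tangent to the simplex, positively correlated with $F$, and Nash-stationary or imitative (e.g. replicator); an equilibrium is stable if it attracts all nearby states. *)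

theory Defs
  imports "HOL-Probability.Probability"
begin

datatype grp = GA | GB

definition coord :: "grp \<Rightarrow> real \<times> real \<Rightarrow> real" where
  "coord k p = (case k of GA \<Rightarrow> fst p | GB \<Rightarrow> snd p)"

definition simplex2 :: "(real \<times> real) set" where
  "simplex2 = {p. fst p \<ge> 0 \<and> snd p \<ge> 0 \<and> fst p + snd p = 1}"

definition mixture :: "real \<times> real \<Rightarrow> 'a pmf \<Rightarrow> 'a pmf \<Rightarrow> 'a pmf" where
  "mixture p DA DB = bind_pmf (bernoulli_pmf (fst p)) (\<lambda>b. if b then DA else DB)"

fun iid_pmf :: "nat \<Rightarrow> 'a pmf \<Rightarrow> 'a list pmf" where
  "iid_pmf 0 D = return_pmf []"
| "iid_pmf (Suc n) D = bind_pmf D (\<lambda>z. map_pmf (\<lambda>zs. z # zs) (iid_pmf n D))"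

text \<open>1-NN prediction: label of the nearest training point; ties broken in favour of the
  smallest index (by exchangeability of i.i.d. samples this equals uniform random tie-breaking
  in distribution).\<close>
definition nn_index :: "('x::metric_space \<times> int) list \<Rightarrow> 'x \<Rightarrow> nat" where
  "nn_index S x = (LEAST i. i < length S \<and>
      (\<forall>j < length S. dist (fst (S ! i)) x \<le> dist (fst (S ! j)) x))"

definition nn_predict :: "('x::metric_space \<times> int) list \<Rightarrow> 'x \<Rightarrow> int" where
  "nn_predict S x = snd (S ! nn_index S x)"

definition nn_game :: "nat \<Rightarrow> ('x::metric_space \<times> int) pmf \<Rightarrow> ('x \<times> int) pmf
    \<Rightarrow> grp \<Rightarrow> real \<times> real \<Rightarrow> real" where
  "nn_game n DA DB k p =
     measure_pmf.expectation (iid_pmf n (mixture p DA DB))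
       (\<lambda>S. measure_pmf.prob (case k of GA \<Rightarrow> DA | GB \<Rightarrow> DB)
               {z. nn_predict S (fst z) = snd z})"

definition noisy_label_pmf ::
    "('x \<times> int) pmf \<Rightarrow> 'x pmf \<Rightarrow> ('x \<Rightarrow> int) \<Rightarrow> real \<Rightarrow> bool" where
  "noisy_label_pmf D mu h eta \<longleftrightarrow>
     (\<forall>x. h x \<in> {-1, 1}) \<and> 0 \<le> eta \<and> eta < 1/2 \<and>
     D = bind_pmf mu (\<lambda>x. map_pmf (\<lambda>flip. (x, if flip then - h x else h x)) (bernoulli_pmf eta))"

definition Fvec :: "(grp \<Rightarrow> real \<times> real \<Rightarrow> real) \<Rightarrow> real \<times> real \<Rightarrow> real \<times> real" where
  "Fvec F p = (F GA p, F GB p)"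

definition nash_eq :: "(grp \<Rightarrow> real \<times> real \<Rightarrow> real) \<Rightarrow> real \<times> real \<Rightarrow> bool" where
  "nash_eq F p \<longleftrightarrow> p \<in> simplex2 \<and>
     (\<forall>k. coord k p > 0 \<longrightarrow> (\<forall>j. F j p \<le> F k p))"

definition tangent_simplex :: "(real \<times> real \<Rightarrow> real \<times> real) \<Rightarrow> bool" where
  "tangent_simplex V \<longleftrightarrow> (\<forall>p \<in> simplex2. fst (V p) + snd (V p) = 0 \<and>
     (\<forall>k. coord k p = 0 \<longrightarrow> coord k (V p) \<ge> 0))"

definition pos_correlated :: "(grp \<Rightarrow> real \<times> real \<Rightarrow> real) \<Rightarrow> (real \<times> real \<Rightarrow> real \<times> real) \<Rightarrow> bool" where
  "pos_correlated F V \<longleftrightarrow> (\<forall>p \<in> simplex2. V p \<noteq> 0 \<longrightarrow> V p \<bullet> Fvec F p > 0)"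

definition nash_stationary :: "(grp \<Rightarrow> real \<times> real \<Rightarrow> real) \<Rightarrow> (real \<times> real \<Rightarrow> real \<times> real) \<Rightarrow> bool" where
  "nash_stationary F V \<longleftrightarrow> (\<forall>p \<in> simplex2. V p = 0 \<longleftrightarrow> nash_eq F p)"

text \<open>Imitative dynamics: V_k(p) = p_k G_k(p) with percentage growth rates monotone in payoffs
  (the replicator dynamic is the case G_k(p) = F_k(p) - sum_j p_j F_j(p)).\<close>
definition imitative :: "(grp \<Rightarrow> real \<times> real \<Rightarrow> real) \<Rightarrow> (real \<times> real \<Rightarrow> real \<times> real) \<Rightarrow> bool" where
  "imitative F V \<longleftrightarrow> (\<exists>G :: grp \<Rightarrow> real \<times> real \<Rightarrow> real. \<forall>p \<in> simplex2.
      (\<forall>k. coord k (V p) = coord k p * G k p) \<and>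
      (\<forall>i j. G i p \<le> G j p \<longleftrightarrow> F i p \<le> F j p))"

definition admissible_dynamics :: "(grp \<Rightarrow> real \<times> real \<Rightarrow> real) \<Rightarrow> (real \<times> real \<Rightarrow> real \<times> real) \<Rightarrow> bool" where
  "admissible_dynamics F V \<longleftrightarrow> continuous_on simplex2 V \<and> tangent_simplex V \<and>
     pos_correlated F V \<and> (nash_stationary F V \<or> imitative F V)"

definition stable_under :: "(real \<times> real \<Rightarrow> real \<times> real) \<Rightarrow> real \<times> real \<Rightarrow> bool" where
  "stable_under V q \<longleftrightarrow> (\<exists>\<epsilon> > 0. \<forall>x :: real \<Rightarrow> real \<times> real.
      (\<forall>t \<ge> 0. x t \<in> simplex2 \<and> (x has_vector_derivative V (x t)) (at t within {0..})) \<and>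
      dist (x 0) q < \<epsilon> \<longrightarrow> (x \<longlongrightarrow> q) at_top)"

definition stable_equilibrium :: "(grp \<Rightarrow> real \<times> real \<Rightarrow> real) \<Rightarrow> real \<times> real \<Rightarrow> bool" where
  "stable_equilibrium F q \<longleftrightarrow> nash_eq F q \<and>
     (\<forall>V. admissible_dynamics F V \<longrightarrow> stable_under V q)"

end

theory Submission
  imports Defs
begin

definition hA :: "real \<Rightarrow> int" where "hA x = (if x = 0 then -1 else 1)"
definition hB :: "real \<Rightarrow> int" where "hB x = (if x = 1 then -1 else 1)"
definition muA :: "real pmf" where
  "muA = bind_pmf (bernoulli_pmf (9/50)) (\<lambda>b. if b then return_pmf 0 else
      map_pmf (\<lambda>c. if c then 1 else 3) (bernoulli_pmf (25/82)))"
definition muB :: "real pmf" where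
  "muB = map_pmf (\<lambda>c. if c then 1 else 3) (bernoulli_pmf (3/100))"
definition DA :: "(real \<times> int) pmf" where
  "DA = bind_pmf muA (\<lambda>x. map_pmf (\<lambda>flip. (x, if flip then - hA x else hA x)) (bernoulli_pmf (1/5)))"
definition DB :: "(real \<times> int) pmf" where
  "DB = bind_pmf muB (\<lambda>x. map_pmf (\<lambda>flip. (x, if flip then - hB x else hB x)) (bernoulli_pmf (3/10)))"

lemma fin_bool: "finite (A :: bool set)" by simp

lemma fin_bind: "finite (set_pmf M) \<Longrightarrow> (\<And>x. x \<in> set_pmf M \<Longrightarrow> finite (set_pmf (N x))) \<Longrightarrow>
   finite (set_pmf (bind_pmf M N))"
  by (simp add: set_bind_pmf)

lemma E_bind:
  assumes "finite (set_pmf M)" "\<And>x. x \<in> set_pmf M \<Longrightarrow> finite (set_pmf (N x))"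
  shows "measure_pmf.expectation (bind_pmf M N) (h :: _ \<Rightarrow> real) =
         measure_pmf.expectation M (\<lambda>x. measure_pmf.expectation (N x) h)"
proof -
  have "measure_pmf.expectation (bind_pmf M N) h =
        (\<Sum>a\<in>set_pmf M. pmf M a *\<^sub>R measure_pmf.expectation (N a) h)"
    by (rule pmf_expectation_bind) (use assms in auto)
  also have "\<dots> = measure_pmf.expectation M (\<lambda>x. measure_pmf.expectation (N x) h)"
    by (subst integral_measure_pmf[of "set_pmf M"]) (use assms in auto)
  finally show ?thesis .
qed

lemma fin_muA: "finite (set_pmf muA)"
  unfolding muA_def by (auto intro!: fin_bind)
lemma fin_muB: "finite (set_pmf muB)"
  unfolding muB_def by auto
lemma fin_DA: "finite (set_pmf DA)"
  unfolding DA_def by (auto intro!: fin_bind fin_muA)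
lemma fin_DB: "finite (set_pmf DB)"
  unfolding DB_def by (auto intro!: fin_bind fin_muB)

lemma E_DA: "measure_pmf.expectation DA (h :: real \<times> int \<Rightarrow> real) =
   9/50 * (4/5 * h (0,-1) + 1/5 * h (0,1)) +
   41/50 * (25/82 * (4/5 * h (1,1) + 1/5 * h (1,-1)) + 57/82 * (4/5 * h (3,1) + 1/5 * h (3,-1)))"
  unfolding DA_def
  apply (subst E_bind)
    apply (auto simp: fin_muA)[2]
  unfolding muA_def
  apply (subst E_bind)
    apply auto[2]
  apply (simp add: hA_def)
  apply (simp add: algebra_simps)
  done

lemma E_DB: "measure_pmf.expectation DB (h :: real \<times> int \<Rightarrow> real) =
   3/100 * (7/10 * h (1,-1) + 3/10 * h (1,1)) + 97/100 * (7/10 * h (3,1) + 3/10 * h (3,-1))"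
  unfolding DB_def
  apply (subst E_bind)
    apply (auto simp: fin_muB)[2]
  unfolding muB_def
  apply (simp add: hB_def)
  apply (simp add: algebra_simps)
  done

lemma E_mix:
  assumes "0 \<le> p" "p \<le> 1"
  shows "measure_pmf.expectation (mixture (p, r) DA DB) (h :: real \<times> int \<Rightarrow> real) =
    p * measure_pmf.expectation DA h + (1 - p) * measure_pmf.expectation DB h"
  unfolding mixture_def
  apply (subst E_bind)
  using assms by (auto simp: fin_DA fin_DB)

lemma fin_mix: "finite (set_pmf (mixture p DA DB))"
  unfolding mixture_def by (auto intro!: fin_bind simp: fin_DA fin_DB)

lemma fin_iid: "finite (set_pmf D) \<Longrightarrow> finite (set_pmf (iid_pmf n D))"
  by (induction n) (auto intro!: fin_bind)

lemma E_iid2: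
  assumes "finite (set_pmf D)"
  shows "measure_pmf.expectation (iid_pmf 2 D) (f :: _ \<Rightarrow> real) =
     measure_pmf.expectation D (\<lambda>z1. measure_pmf.expectation D (\<lambda>z2. f [z1, z2]))"
  unfolding numeral_2_eq_2
  apply (simp only: iid_pmf.simps)
  apply (subst E_bind)
  using assms apply (auto intro!: fin_iid)[2]
  apply (simp only: integral_map_pmf)
  apply (subst E_bind)
  using assms apply (auto)[2]
  apply simp
  done

lemma nn2: "nn_predict [z1, z2] x = (if dist (fst z1) x \<le> dist (fst z2) x then snd z1 else snd z2)"
proof (cases "dist (fst z1) x \<le> dist (fst z2) x")
  case True
  have "nn_index [z1, z2] x = 0"
    unfolding nn_index_def
    by (rule Least_eq_0) (use True in \<open>auto simp: less_Suc_eq\<close>)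
  then show ?thesis using True by (simp add: nn_predict_def)
next
  case False
  have "nn_index [z1, z2] x = 1"
    unfolding nn_index_def
    by (rule Least_equality) (use False in \<open>auto simp: less_Suc_eq\<close>)
  then show ?thesis using False by (simp add: nn_predict_def)
qed

lemma prob_E: "measure_pmf.prob M A = measure_pmf.expectation M (indicator A)"
  by simp

definition Pk :: "grp \<Rightarrow> real \<times> int \<Rightarrow> real \<times> int \<Rightarrow> real" where
  "Pk k z1 z2 = measure_pmf.prob (case k of GA \<Rightarrow> DA | GB \<Rightarrow> DB)
       {z. nn_predict [z1, z2] (fst z) = snd z}"

lemma lin_DA: "measure_pmf.expectation DA (\<lambda>z. p * (a :: real \<times> int \<Rightarrow> real) z + (1 - p) * b z) =
   p * measure_pmf.expectation DA a + (1 - p) * measure_pmf.expectation DA b"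
  by (simp only: E_DA) (simp add: field_simps)
lemma lin_DB: "measure_pmf.expectation DB (\<lambda>z. p * (a :: real \<times> int \<Rightarrow> real) z + (1 - p) * b z) =
   p * measure_pmf.expectation DB a + (1 - p) * measure_pmf.expectation DB b"
  by (simp only: E_DB) (simp add: field_simps)

lemma game_eq:
  assumes "0 \<le> p" "p \<le> 1"
  shows "nn_game 2 DA DB k (p, r) =
    p * (p * measure_pmf.expectation DA (\<lambda>z1. measure_pmf.expectation DA (Pk k z1))
      + (1 - p) * measure_pmf.expectation DA (\<lambda>z1. measure_pmf.expectation DB (Pk k z1)))
  + (1 - p) * (p * measure_pmf.expectation DB (\<lambda>z1. measure_pmf.expectation DA (Pk k z1))
      + (1 - p) * measure_pmf.expectation DB (\<lambda>z1. measure_pmf.expectation DB (Pk k z1)))"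
  unfolding nn_game_def
  apply (subst E_iid2[OF fin_mix])
  apply (simp only: E_mix[OF assms] flip: Pk_def)
  apply (simp only: lin_DA lin_DB)
  done

lemma PA: "Pk GA z1 z2 = 9/50 * (4/5 * (if nn_predict [z1, z2] 0 = -1 then 1 else 0) + 1/5 * (if nn_predict [z1, z2] 0 = 1 then 1 else 0)) +
   41/50 * (25/82 * (4/5 * (if nn_predict [z1, z2] 1 = 1 then 1 else 0) + 1/5 * (if nn_predict [z1, z2] 1 = -1 then 1 else 0))
    + 57/82 * (4/5 * (if nn_predict [z1, z2] 3 = 1 then 1 else 0) + 1/5 * (if nn_predict [z1, z2] 3 = -1 then 1 else 0)))"
  unfolding Pk_def grp.case by (subst prob_E, simp only: E_DA, simp add: indicator_def)

lemma PB: "Pk GB z1 z2 = 3/100 * (7/10 * (if nn_predict [z1, z2] 1 = -1 then 1 else 0) + 3/10 * (if nn_predict [z1, z2] 1 = 1 then 1 else 0))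
   + 97/100 * (7/10 * (if nn_predict [z1, z2] 3 = 1 then 1 else 0) + 3/10 * (if nn_predict [z1, z2] 3 = -1 then 1 else 0))"
  unfolding Pk_def grp.case by (subst prob_E, simp only: E_DB, simp add: indicator_def)

lemma cAAA: "measure_pmf.expectation DA (\<lambda>z1. measure_pmf.expectation DA (Pk GA z1)) = 152099/250000"
  by (simp add: E_DA E_DB PA nn2 dist_real_def)

lemma cAAB: "measure_pmf.expectation DA (\<lambda>z1. measure_pmf.expectation DB (Pk GA z1)) = 7439971/12500000"
  by (simp add: E_DA E_DB PA nn2 dist_real_def)

lemma cABA: "measure_pmf.expectation DB (\<lambda>z1. measure_pmf.expectation DA (Pk GA z1)) = 7156579/12500000"
  by (simp add: E_DA E_DB PA nn2 dist_real_def)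

lemma cABB: "measure_pmf.expectation DB (\<lambda>z1. measure_pmf.expectation DB (Pk GA z1)) = 143921/250000"
  by (simp add: E_DA E_DB PA nn2 dist_real_def)

lemma cBAA: "measure_pmf.expectation DA (\<lambda>z1. measure_pmf.expectation DA (Pk GB z1)) = 75871/125000"
  by (simp add: E_DA E_DB PB nn2 dist_real_def)

lemma cBAB: "measure_pmf.expectation DA (\<lambda>z1. measure_pmf.expectation DB (Pk GB z1)) = 7462013/12500000"
  by (simp add: E_DA E_DB PB nn2 dist_real_def)

lemma cBBA: "measure_pmf.expectation DB (\<lambda>z1. measure_pmf.expectation DA (Pk GB z1)) = 287381/500000"
  by (simp add: E_DA E_DB PB nn2 dist_real_def)

lemma cBBB: "measure_pmf.expectation DB (\<lambda>z1. measure_pmf.expectation DB (Pk GB z1)) = 35959/62500"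
  by (simp add: E_DA E_DB PB nn2 dist_real_def)

lemma F_GA: "0 \<le> p \<Longrightarrow> p \<le> 1 \<Longrightarrow>
   nn_game 2 DA DB GA (p, r) = 143921/250000 + 4089/250000 * p + 4089/250000 * p^2"
  by (simp add: game_eq cAAA cAAB cABA cABB) (simp add: field_simps power2_eq_square)

lemma F_GB: "0 \<le> p \<Longrightarrow> p \<le> 1 \<Longrightarrow>
   nn_game 2 DA DB GB (p, r) = 35959/62500 + 131469/6250000 * p + 66181/6250000 * p^2"
  by (simp add: game_eq cBAA cBAB cBBA cBBB) (simp add: field_simps power2_eq_square)

lemma ode_conv:
  fixes u v :: "real \<Rightarrow> real" and q \<delta> :: real
  assumes der: "\<And>t. t \<ge> 0 \<Longrightarrow> (u has_real_derivative v (u t)) (at t within {0..})"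
    and cont: "continuous_on {q-\<delta>..q+\<delta>} v"
    and sgn: "\<And>s. q-\<delta> \<le> s \<Longrightarrow> s \<le> q+\<delta> \<Longrightarrow> s \<noteq> q \<Longrightarrow> (s - q) * v s < 0"
    and init: "\<bar>u 0 - q\<bar> < \<delta>"
  shows "(u \<longlongrightarrow> q) at_top"
proof -
  define \<phi> where "\<phi> t = (u t - q) * (u t - q)" for t
  have ucont: "continuous_on {0..} u"
    unfolding continuous_on_eq_continuous_within
    using der by (auto intro: has_derivative_continuous simp: has_field_derivative_def)
  have \<phi>cont: "continuous_on {0..} \<phi>"
    unfolding \<phi>_def by (intro continuous_intros ucont)
  have uder: "(u has_real_derivative v (u t)) (at t)" if "t > 0" for t
  proof -
    have "at t within {0..} = at t"
      by (rule at_within_interior) (use that in simp)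
    with der[of t] that show ?thesis by simp
  qed
  have \<phi>der: "(\<phi> has_real_derivative 2 * ((u t - q) * v (u t))) (at t)" if "t > 0" for t
    unfolding \<phi>_def
    by (rule derivative_eq_intros uder[OF that] | simp)+
  define \<delta>' where "\<delta>' = (\<bar>u 0 - q\<bar> + \<delta>) / 2"
  have d1: "\<bar>u 0 - q\<bar> < \<delta>'" "\<delta>' < \<delta>" using init unfolding \<delta>'_def by auto
  have hle: "(s - q) * v s \<le> 0" if "\<bar>s - q\<bar> \<le> \<delta>" for s
    using sgn[of s] that by (cases "s = q") (auto simp: abs_le_iff)
  have bound: "\<bar>u t - q\<bar> < \<delta>'" if "t \<ge> 0" for t
  proof (rule ccontr)
    assume "\<not> ?thesis"
    hence st: "\<delta>' \<le> \<bar>u t - q\<bar>" by simp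
    define S where "S = {0..t} \<inter> (\<lambda>s. \<bar>u s - q\<bar>) -` {\<delta>'..}"
    have "continuous_on {0..t} (\<lambda>s. \<bar>u s - q\<bar>)"
      by (intro continuous_intros continuous_on_subset[OF ucont]) auto
    hence clS: "closed S" unfolding S_def
      by (intro continuous_closed_preimage) auto
    have tS: "t \<in> S" using st that by (auto simp: S_def)
    have bdd: "bdd_below S" unfolding S_def by (auto intro: bdd_belowI[of _ 0])
    define t1 where "t1 = Inf S"
    have t1S: "t1 \<in> S" unfolding t1_def using closed_contains_Inf[OF _ bdd clS] tS by auto
    hence t1ge: "\<delta>' \<le> \<bar>u t1 - q\<bar>" and t1r: "0 \<le> t1" by (auto simp: S_def)
    have below: "\<bar>u s - q\<bar> < \<delta>'" if "0 \<le> s" "s < t1" for s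
    proof (rule ccontr)
      assume "\<not> ?thesis"
      hence "s \<in> S" using that t1S by (auto simp: S_def)
      hence "t1 \<le> s" unfolding t1_def using bdd by (rule cInf_lower)
      with that show False by simp
    qed
    have "\<phi> t1 \<le> \<phi> 0"
    proof (rule DERIV_nonpos_imp_decreasing_open[OF t1r])
      fix s assume "0 < s" "s < t1"
      hence "\<bar>u s - q\<bar> \<le> \<delta>" using below[of s] d1 by auto
      hence h: "(u s - q) * v (u s) \<le> 0" by (rule hle)
      show "\<exists>y. DERIV \<phi> s :> y \<and> y \<le> 0"
      proof (intro exI conjI)
        show "DERIV \<phi> s :> 2 * ((u s - q) * v (u s))" using \<phi>der[OF \<open>0 < s\<close>] .
        show "2 * ((u s - q) * v (u s)) \<le> 0" using h by linarith
      qed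
    next
      show "continuous_on {0..t1} \<phi>" by (rule continuous_on_subset[OF \<phi>cont]) auto
    qed
    moreover have "\<phi> 0 < \<delta>' * \<delta>'"
    proof -
      have "\<bar>u 0 - q\<bar> * \<bar>u 0 - q\<bar> < \<delta>' * \<delta>'"
        using d1(1) by (intro mult_strict_mono') auto
      thus ?thesis unfolding \<phi>_def by (simp add: abs_mult_self_eq)
    qed
    moreover have "\<delta>' * \<delta>' \<le> \<phi> t1"
    proof -
      have "0 \<le> \<delta>'" using d1(1) by linarith
      hence "\<delta>' * \<delta>' \<le> \<bar>u t1 - q\<bar> * \<bar>u t1 - q\<bar>"
        using t1ge by (intro mult_mono) auto
      thus ?thesis unfolding \<phi>_def by (simp add: abs_mult_self_eq)
    qed
    ultimately show False by simp
  qed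
  have \<phi>d: "2 * ((u t - q) * v (u t)) \<le> 0" if "t > 0" for t
  proof -
    have "\<bar>u t - q\<bar> \<le> \<delta>" using bound[of t] d1 that by auto
    hence "(u t - q) * v (u t) \<le> 0" by (rule hle)
    thus ?thesis by linarith
  qed
  have mono: "\<phi> b \<le> \<phi> a" if "0 \<le> a" "a \<le> b" for a b
  proof (rule DERIV_nonpos_imp_decreasing_open[OF that(2)])
    fix s assume "a < s" "s < b"
    hence "s > 0" using that by simp
    thus "\<exists>y. DERIV \<phi> s :> y \<and> y \<le> 0" using \<phi>der \<phi>d by blast
  next
    show "continuous_on {a..b} \<phi>" by (rule continuous_on_subset[OF \<phi>cont]) (use that in auto)
  qed
  have ev: "eventually (\<lambda>t. \<bar>u t - q\<bar> < e) at_top" if "e > 0" for e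
  proof (cases "\<exists>T\<ge>0. \<phi> T < e * e")
    case True
    then obtain T where T: "T \<ge> 0" "\<phi> T < e * e" by auto
    show ?thesis unfolding eventually_at_top_linorder
    proof (intro exI allI impI)
      fix t assume "t \<ge> T"
      hence "\<phi> t < e * e" using mono[of T t] T by auto
      hence lt: "\<bar>u t - q\<bar> * \<bar>u t - q\<bar> < e * e" unfolding \<phi>_def by (simp add: abs_mult_self_eq)
      show "\<bar>u t - q\<bar> < e"
      proof (rule ccontr)
        assume "\<not> \<bar>u t - q\<bar> < e"
        hence "e * e \<le> \<bar>u t - q\<bar> * \<bar>u t - q\<bar>" using \<open>e > 0\<close> by (intro mult_mono) auto
        with lt show False by simp
      qed
    qed
  next
    case False
    hence big: "e * e \<le> \<phi> t" if "t \<ge> 0" for t using that by auto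
    define K where "K = {q-\<delta>'..q+\<delta>'} \<inter> {s. e * e \<le> (s - q) * (s - q)}"
    have "closed {s::real. e * e \<le> (s - q) * (s - q)}"
      by (intro closed_Collect_le continuous_intros)
    hence cK: "compact K" unfolding K_def by (intro compact_Int_closed) auto
    have u0K: "u 0 \<in> K" unfolding K_def using big[of 0] d1 by (auto simp: \<phi>_def abs_le_iff)
    have "continuous_on K (\<lambda>s. (s - q) * v s)"
      by (intro continuous_intros continuous_on_subset[OF cont]) (use d1 in \<open>auto simp: K_def\<close>)
    then obtain s0 where s0: "s0 \<in> K" "\<And>s. s \<in> K \<Longrightarrow> (s - q) * v s \<le> (s0 - q) * v s0"
      using continuous_attains_sup[OF cK] u0K by blast
    define M where "M = (s0 - q) * v s0"
    have "e * e > 0" using \<open>e > 0\<close> by simp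
    hence "s0 \<noteq> q" using s0(1) unfolding K_def by auto
    hence Mneg: "M < 0" unfolding M_def using sgn[of s0] s0(1) d1 unfolding K_def by auto
    have uK: "u t \<in> K" if "t \<ge> 0" for t
      using bound[OF that] big[OF that] unfolding K_def \<phi>_def by (auto simp: abs_le_iff)
    define \<psi> where "\<psi> t = \<phi> t - 2 * M * t" for t
    define T where "T = (\<phi> 0 + 1) / (- 2 * M)"
    have "\<phi> 0 \<ge> 0" unfolding \<phi>_def by simp
    hence T0: "T > 0" unfolding T_def using Mneg by (intro divide_pos_pos) auto
    have "\<psi> T \<le> \<psi> 0"
    proof (rule DERIV_nonpos_imp_decreasing_open[of 0 T])
      show "0 \<le> T" using T0 by simp
      fix s assume s: "0 < s" "s < T"
      have "(\<psi> has_real_derivative 2 * ((u s - q) * v (u s)) - 2 * M) (at s)"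
        unfolding \<psi>_def by (rule derivative_eq_intros \<phi>der[OF s(1)] | simp)+
      moreover have "(u s - q) * v (u s) \<le> M" using s0(2)[OF uK[of s]] s unfolding M_def by simp
      ultimately show "\<exists>y. DERIV \<psi> s :> y \<and> y \<le> 0" by (intro exI conjI) auto
    next
      show "continuous_on {0..T} \<psi>" unfolding \<psi>_def
        by (intro continuous_intros continuous_on_subset[OF \<phi>cont]) auto
    qed
    hence "\<phi> T \<le> \<phi> 0 + 2 * M * T" unfolding \<psi>_def by simp
    also have "2 * M * T = - (\<phi> 0 + 1)" unfolding T_def using Mneg by (simp add: field_simps)
    finally have "\<phi> T < 0" by simp
    moreover have "\<phi> T \<ge> 0" unfolding \<phi>_def by simp
    ultimately show ?thesis by simp
  qed
  show ?thesis
    unfolding tendsto_iff dist_real_def using ev by blast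
qed

lemma sign_V:
  assumes adm: "admissible_dynamics F V" and p: "p \<in> simplex2" "0 < fst p" "0 < snd p"
    and d: "F GA p - F GB p \<noteq> 0"
  shows "fst (V p) * (F GA p - F GB p) > 0"
proof -
  have tan: "fst (V p) + snd (V p) = 0"
    using adm p unfolding admissible_dynamics_def tangent_simplex_def by auto
  have Vne: "V p \<noteq> 0"
    using adm unfolding admissible_dynamics_def
  proof (elim conjE disjE)
    assume "nash_stationary F V"
    moreover have "\<not> nash_eq F p"
    proof
      assume "nash_eq F p"
      hence "F GB p \<le> F GA p" "F GA p \<le> F GB p"
        using p unfolding nash_eq_def coord_def by (auto dest: spec[of _ GA] spec[of _ GB])
      with d show False by simp
    qed
    ultimately show ?thesis using p unfolding nash_stationary_def by auto
  next
    assume "imitative F V"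
    then obtain G where G: "\<And>k. coord k (V p) = coord k p * G k p"
      "\<And>i j. G i p \<le> G j p \<longleftrightarrow> F i p \<le> F j p"
      using p unfolding imitative_def by blast
    show ?thesis
    proof
      assume "V p = 0"
      hence "fst p * G GA p = 0" "snd p * G GB p = 0"
        using G(1)[of GA] G(1)[of GB] unfolding coord_def by auto
      hence "G GA p = 0" "G GB p = 0" using p by auto
      hence "F GA p \<le> F GB p" "F GB p \<le> F GA p" using G(2)[of GA GB] G(2)[of GB GA] by auto
      with d show False by simp
    qed
  qed
  have "V p \<bullet> Fvec F p > 0"
    using adm p Vne unfolding admissible_dynamics_def pos_correlated_def by auto
  moreover have "V p \<bullet> Fvec F p = fst (V p) * (F GA p - F GB p)"
  proof -
    obtain a b where ab: "V p = (a, b)" by (cases "V p")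
    hence "b = - a" using tan by simp
    thus ?thesis using ab by (simp add: Fvec_def algebra_simps)
  qed
  ultimately show ?thesis by simp
qed

definition gg :: "real \<Rightarrow> real" where
  "gg s = 17/50000 - 7311/1562500 * s + 9011/1562500 * s^2"

lemma F_diff: "p \<in> simplex2 \<Longrightarrow> nn_game 2 DA DB GA p - nn_game 2 DA DB GB p = gg (fst p)"
proof -
  assume "p \<in> simplex2"
  hence "0 \<le> fst p" "fst p \<le> 1" unfolding simplex2_def by auto
  hence "nn_game 2 DA DB GA (fst p, snd p) - nn_game 2 DA DB GB (fst p, snd p) = gg (fst p)"
    by (simp only: F_GA F_GB) (simp add: gg_def field_simps)
  thus ?thesis by simp
qed

lemma gg_dec: "0 \<le> s \<Longrightarrow> s < t \<Longrightarrow> t \<le> 3/10 \<Longrightarrow> gg t < gg s"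
proof -
  assume a: "0 \<le> s" "s < t" "t \<le> 3/10"
  have e: "gg t - gg s = (t - s) * (9011/1562500 * (t + s) - 7311/1562500)"
    by (simp add: gg_def field_simps power2_eq_square)
  have "9011/1562500 * (t + s) - 7311/1562500 < 0" using a by simp
  hence "(t - s) * (9011/1562500 * (t + s) - 7311/1562500) < 0"
    using a by (intro mult_pos_neg) auto
  with e show ?thesis by simp
qed

lemma gg_root: "\<exists>q. 0 < q \<and> q < 1/10 \<and> gg q = 0"
proof -
  have "continuous_on {0..1/10} gg" unfolding gg_def by (intro continuous_intros)
  moreover have "gg (1/10) \<le> 0" "0 \<le> gg 0" by (simp_all add: gg_def power2_eq_square)
  ultimately obtain q where q: "0 \<le> q" "q \<le> 1/10" "gg q = 0"
    using IVT2'[of gg "1/10" 0 0] by auto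
  moreover have "gg 0 \<noteq> 0" "gg (1/10) \<noteq> 0" by (simp_all add: gg_def power2_eq_square)
  hence "q \<noteq> 0" "q \<noteq> 1/10" using q by metis+
  ultimately show ?thesis by (intro exI[of _ q]) auto
qed

lemma vd_fst: "(x has_vector_derivative w) F \<Longrightarrow> ((\<lambda>t. fst (x t)) has_real_derivative fst w) F"
  unfolding has_vector_derivative_def has_field_derivative_def
  by (drule has_derivative_fst) (erule has_derivative_eq_rhs, auto simp: fun_eq_iff)

theorem theorem6:
  shows "\<exists>(DA :: (real \<times> int) pmf) (DB :: (real \<times> int) pmf) muA muB hA hB etaA etaB n q.
     noisy_label_pmf DA muA hA etaA \<and> noisy_label_pmf DB muB hB etaB \<and> etaA + etaB > 0 \<and>
     n \<ge> 1 \<and>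
     stable_equilibrium (nn_game n DA DB) q \<and> fst q > 0 \<and> snd q > 0"
proof -
  obtain q where q: "0 < q" "q < 1/10" "gg q = 0" using gg_root by blast
  define F where "F = nn_game 2 DA DB"
  define qq where "qq = (q, 1 - q)"
  have qqs: "qq \<in> simplex2" using q unfolding qq_def simplex2_def by auto
  have Fd: "F GA p - F GB p = gg (fst p)" if "p \<in> simplex2" for p
    unfolding F_def using F_diff[OF that] .
  have Feq: "F j qq = F k qq" for j k
    using Fd[OF qqs] q(3) unfolding qq_def by (cases j; cases k) auto
  have nash: "nash_eq F qq"
  proof -
    have "F j qq \<le> F k qq" for j k using Feq[of j k] by simp
    thus ?thesis unfolding nash_eq_def using qqs by blast
  qed
  have stab: "stable_under V qq" if adm: "admissible_dynamics F V" for V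
  proof -
    define \<delta> where "\<delta> = q / 2"
    have \<delta>0: "\<delta> > 0" using q unfolding \<delta>_def by simp
    show ?thesis unfolding stable_under_def
    proof (intro exI[of _ \<delta>] conjI allI impI)
      show "\<delta> > 0" by (rule \<delta>0)
      fix x :: "real \<Rightarrow> real \<times> real"
      assume H: "(\<forall>t\<ge>0. x t \<in> simplex2 \<and> (x has_vector_derivative V (x t)) (at t within {0..}))
                 \<and> dist (x 0) qq < \<delta>"
      have H1: "x t \<in> simplex2" if "t \<ge> 0" for t using H that by blast
      have H2: "(x has_vector_derivative V (x t)) (at t within {0..})" if "t \<ge> 0" for t
        using H that by blast
      have H3: "dist (x 0) qq < \<delta>" using H by blast
      define u where "u t = fst (x t)" for t
      define v where "v s = fst (V (s, 1 - s))" for s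
      have xt: "x t = (u t, 1 - u t)" if "t \<ge> 0" for t
      proof -
        have "snd (x t) = 1 - fst (x t)" using H1[OF that] by (simp add: simplex2_def)
        thus ?thesis unfolding u_def by (metis prod.collapse)
      qed
      have der: "(u has_real_derivative v (u t)) (at t within {0..})" if "t \<ge> 0" for t
      proof -
        have "((\<lambda>t. fst (x t)) has_real_derivative fst (V (x t))) (at t within {0..})"
          using H2[OF that] by (rule vd_fst)
        moreover have "(\<lambda>t. fst (x t)) = u" by (simp add: u_def fun_eq_iff)
        moreover have "fst (V (x t)) = v (u t)" unfolding v_def by (subst xt[OF that]) (rule refl)
        ultimately show ?thesis by simp
      qed
      have Vc: "continuous_on simplex2 V" using adm unfolding admissible_dynamics_def by auto
      have cont: "continuous_on {q-\<delta>..q+\<delta>} v"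
        unfolding v_def
        by (intro continuous_on_fst continuous_on_compose2[OF Vc] continuous_intros)
           (use q in \<open>auto simp: simplex2_def \<delta>_def\<close>)
      have sgn: "(s - q) * v s < 0" if s: "q-\<delta> \<le> s" "s \<le> q+\<delta>" "s \<noteq> q" for s
      proof -
        define p where "p = (s, 1 - s)"
        have ps: "p \<in> simplex2" "0 < fst p" "0 < snd p"
          using s q unfolding p_def simplex2_def \<delta>_def by auto
        have s0: "0 \<le> s" "s \<le> 3/10" using s q unfolding \<delta>_def by auto
        have gs: "gg s \<noteq> 0 \<and> (s < q \<longrightarrow> gg s > 0) \<and> (q < s \<longrightarrow> gg s < 0)"
        proof (cases "s < q")
          case True
          then show ?thesis using gg_dec[of s q] q s0 by auto
        next
          case False
          hence "q < s" using s by simp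
          then show ?thesis using gg_dec[of q s] q s0 by auto
        qed
        have "fst (V p) * (F GA p - F GB p) > 0"
          by (rule sign_V[OF adm ps]) (use Fd[OF ps(1)] gs p_def in simp)
        hence "v s * gg s > 0" using Fd[OF ps(1)] unfolding v_def p_def by simp
        show ?thesis
        proof (cases "s < q")
          case True
          hence "gg s > 0" using gs by simp
          hence "v s > 0" using \<open>v s * gg s > 0\<close> by (simp add: zero_less_mult_iff)
          thus ?thesis using True by (intro mult_neg_pos) auto
        next
          case False
          hence "q < s" using s(3) by simp
          hence "gg s < 0" using gs by simp
          hence "v s < 0" using \<open>v s * gg s > 0\<close> by (simp add: zero_less_mult_iff)
          thus ?thesis using \<open>q < s\<close> by (intro mult_pos_neg) auto
        qed
      qed
      have init: "\<bar>u 0 - q\<bar> < \<delta>"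
      proof -
        have "dist (u 0) q < \<delta>" using dist_fst_le[of "x 0" qq] H3 unfolding u_def qq_def by simp
        thus ?thesis by (simp add: dist_real_def)
      qed
      have uq: "(u \<longlongrightarrow> q) at_top"
        by (rule ode_conv[OF der cont sgn init])
      have "((\<lambda>t. (u t, 1 - u t)) \<longlongrightarrow> qq) at_top"
        unfolding qq_def by (intro tendsto_intros uq)
      moreover have "eventually (\<lambda>t. (u t, 1 - u t) = x t) at_top"
        using eventually_ge_at_top[of "0::real"] by eventually_elim (simp add: xt)
      ultimately show "(x \<longlongrightarrow> qq) at_top" by (rule Lim_transform_eventually)
    qed
  qed
  have nA: "noisy_label_pmf DA muA hA (1/5)"
    unfolding noisy_label_pmf_def DA_def hA_def by auto
  have nB: "noisy_label_pmf DB muB hB (3/10)"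
    unfolding noisy_label_pmf_def DB_def hB_def by auto
  have "stable_equilibrium (nn_game 2 DA DB) qq"
    unfolding stable_equilibrium_def using nash stab unfolding F_def by blast
  thus ?thesis using nA nB q unfolding qq_def
    by (intro exI[of _ DA] exI[of _ DB] exI[of _ muA] exI[of _ muB] exI[of _ hA] exI[of _ hB]
        exI[of _ "1/5"] exI[of _ "3/10"] exI[of _ "2::nat"] exI[of _ qq]) (auto simp: qq_def)
qed

end
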